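(* Let $R \in \mathrm{SO}(3)$, let $t \in \mathbb{R}^3$, and let $E = [t]_\times R$ be non-zero. Put $\tau = \operatorname{tr} R$. Then $$\frac{1}{2}(\tau^2 - 1)\operatorname{tr}(EE^{\mathrm T}) + (\tau + 1)\operatorname{tr}(E^2) - \tau\,(\operatorname{tr} E)^2 = 0.$$
   Context: For a 3-vector $a$, $[a]_\times$ denotes the $3\times 3$ skew-symmetric matrix with $[a]_\times b = a\times b$ for every $b\in\mathbb{R}^3$. *)

theory Defs
  imports "HOL-Analysis.Analysis" "HOL-Analysis.Cross3"
begin

text \<open>The skew-symmetric cross-product matrix: its j-th column is a cross e_j,
so that (skew a) *v b = a cross b for all b.\<close>
definition skew :: "real^3 \<Rightarrow> real^3^3" where
  "skew a = (\<chi> i j. (cross3 a (axis j 1)) $ i)"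

end

theory Submission imports Defs begin
lemma key:
  fixes a11 a12 a13 a21 a22 a23 a31 a32 a33 t1 t2 t3 :: real
  assumes h0: "(- 1 + a31*a31 + a21*a21 + a11*a11) = 0"
  assumes h1: "(- 1 + a13*a13 + a12*a12 + a11*a11) = 0"
  assumes h2: "(a31*a32 + a21*a22 + a11*a12) = 0"
  assumes h3: "(a13*a23 + a12*a22 + a11*a21) = 0"
  assumes h4: "(a31*a33 + a21*a23 + a11*a13) = 0"
  assumes h5: "(a13*a33 + a12*a32 + a11*a31) = 0"
  assumes h6: "(- 1 + a32*a32 + a22*a22 + a12*a12) = 0"
  assumes h7: "(- 1 + a23*a23 + a22*a22 + a21*a21) = 0"
  assumes h8: "(a32*a33 + a22*a23 + a12*a13) = 0"
  assumes h9: "(a23*a33 + a22*a32 + a21*a31) = 0"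
  assumes h10: "(- 1 + a33*a33 + a23*a23 + a13*a13) = 0"
  assumes h11: "(- 1 + a33*a33 + a32*a32 + a31*a31) = 0"
  assumes h12: "(- a22*a31 + a21*a32 - a13) = 0"
  assumes h13: "(- a23 + a12*a31 - a11*a32) = 0"
  assumes h14: "(- a33 - a12*a21 + a11*a22) = 0"
  assumes h15: "(- a23*a32 + a22*a33 - a11) = 0"
  assumes h16: "(- a21 + a13*a32 - a12*a33) = 0"
  assumes h17: "(- a31 - a13*a22 + a12*a23) = 0"
  assumes h18: "(a23*a31 - a21*a33 - a12) = 0"
  assumes h19: "(- a22 - a13*a31 + a11*a33) = 0"
  assumes h20: "(- a32 + a13*a21 - a11*a23) = 0"
  assumes h21: "(- 1 - a13*a22*a31 + a13*a21*a32 + a12*a23*a31 - a12*a21*a33 - a11*a23*a32 + a11*a22*a33) = 0"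
  shows "(1/2) * ((a33 + a22 + a11)^2 - 1) * (a33*a33*t2*t2 + a33*a33*t1*t1 + a32*a32*t2*t2 + a32*a32*t1*t1 + a31*a31*t2*t2 + a31*a31*t1*t1 - 2*a23*a33*t2*t3 + a23*a23*t3*t3 + a23*a23*t1*t1 - 2*a22*a32*t2*t3 + a22*a22*t3*t3 + a22*a22*t1*t1 - 2*a21*a31*t2*t3 + a21*a21*t3*t3 + a21*a21*t1*t1 - 2*a13*a33*t1*t3 - 2*a13*a23*t1*t2 + a13*a13*t3*t3 + a13*a13*t2*t2 - 2*a12*a32*t1*t3 - 2*a12*a22*t1*t2 + a12*a12*t3*t3 + a12*a12*t2*t2 - 2*a11*a31*t1*t3 - 2*a11*a21*t1*t2 + a11*a11*t3*t3 + a11*a11*t2*t2) + ((a33 + a22 + a11) + 1) * (a32*a32*t1*t1 - 2*a31*a32*t1*t2 + a31*a31*t2*t2 + a23*a23*t1*t1 - 2*a22*a33*t1*t1 + 2*a22*a31*t1*t3 + 2*a21*a33*t1*t2 - 2*a21*a31*t2*t3 - 2*a21*a23*t1*t3 + a21*a21*t3*t3 - 2*a13*a23*t1*t2 + 2*a13*a22*t1*t3 + a13*a13*t2*t2 + 2*a12*a33*t1*t2 - 2*a12*a32*t1*t3 - 2*a12*a13*t2*t3 + a12*a12*t3*t3 - 2*a11*a33*t2*t2 + 2*a11*a32*t2*t3 + 2*a11*a23*t2*t3 - 2*a11*a22*t3*t3) - (a33 + a22 + a11) * (- a32*t1 + a31*t2 + a23*t1 - a21*t3 - a13*t2 + a12*t3)^2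 = 0"
proof -
  have "(1/2) * ((a33 + a22 + a11)^2 - 1) * (a33*a33*t2*t2 + a33*a33*t1*t1 + a32*a32*t2*t2 + a32*a32*t1*t1 + a31*a31*t2*t2 + a31*a31*t1*t1 - 2*a23*a33*t2*t3 + a23*a23*t3*t3 + a23*a23*t1*t1 - 2*a22*a32*t2*t3 + a22*a22*t3*t3 + a22*a22*t1*t1 - 2*a21*a31*t2*t3 + a21*a21*t3*t3 + a21*a21*t1*t1 - 2*a13*a33*t1*t3 - 2*a13*a23*t1*t2 + a13*a13*t3*t3 + a13*a13*t2*t2 - 2*a12*a32*t1*t3 - 2*a12*a22*t1*t2 + a12*a12*t3*t3 + a12*a12*t2*t2 - 2*a11*a31*t1*t3 - 2*a11*a21*t1*t2 + a11*a11*t3*t3 + a11*a11*t2*t2) + ((a33 + a22 + a11) + 1) * (a32*a32*t1*t1 - 2*a31*a32*t1*t2 + a31*a31*t2*t2 + a23*a23*t1*t1 - 2*a22*a33*t1*t1 + 2*a22*a31*t1*t3 + 2*a21*a33*t1*t2 - 2*a21*a31*t2*t3 - 2*a21*a23*t1*t3 + a21*a21*t3*t3 - 2*a13*a23*t1*t2 + 2*a13*a22*t1*t3 + a13*a13*t2*t2 + 2*a12*a33*t1*t2 - 2*a12*a32*t1*t3 - 2*a12*a13*t2*t3 + a12*a12*t3*t3 - 2*a11*a33*t2*t2 + 2*a11*a32*t2*t3 + 2*a11*a23*t2*t3 - 2*a11*a22*t3*t3) - (a33 + a22 + a11) * (- a32*t1 + a31*t2 + a23*t1 - a21*t3 - a13*t2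 + a12*t3)^2 = ((1/2)*t2*t2 - (1/2)*t1*t1 + (1/2)*a33*a33*t2*t2 + (1/2)*a33*a33*t1*t1 + 2*a32*a32*t2*t2 + a22*a33*t2*t2 + a22*a33*t1*t1 - a22*a32*t2*t3 + (1/2)*a22*a22*t2*t2 + (1/2)*a22*a22*t1*t1 - 2*a21*a32*t1*t3 - 2*a21*a22*t1*t2 + a11*a33*t2*t2 + a11*a33*t1*t1 - 2*a11*a32*t2*t3 - a11*a22*t2*t2 - a11*a22*t1*t1 - 2*a11*a12*t1*t2 + (1/2)*a11*a11*t2*t2 + (1/2)*a11*a11*t1*t1) * (- 1 + a31*a31 + a21*a21 + a11*a11) + ((1/2)*t3*t3 - 2*t2*t2 - (1/2)*t1*t1 + 2*a33*t1*t1 + (1/2)*a33*a33*t3*t3 - (1/2)*a33*a33*t2*t2 - a33*a33*t1*t1 + a23*a33*t2*t3 + 2*a22*t1*t1 + a22*a33*t3*t3 - a22*a33*t1*t1 + (1/2)*a22*a22*t3*t3 + (1/2)*a22*a22*t2*t2 - 2*a21*t1*t2 - 2*a12*t1*t2 + a11*a33*t3*t3 - a11*a33*t1*t1 + a11*a22*t3*t3 - a11*a22*t1*t1 + (1/2)*a11*a11*t3*t3 - (1/2)*a11*a11*t1*t1) * (- 1 + a13*a13 + a12*a12 + a11*a11) + (- 2*t1*t2 + 2*a33*t1*t2 - 2*a31*a32*t2*t2 + a22*a31*t2*t3 + 2*a21*a31*t1*t3 + 2*a21*a21*t1*t2 + 2*a11*t1*t2 + 2*a11*a32*t1*t3 +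 2*a11*a31*t2*t3 + 2*a11*a21*t2*t2 + 2*a11*a21*t1*t1 + 2*a11*a12*t2*t2 + 2*a11*a12*t1*t1 + 2*a11*a11*t1*t2) * (a31*a32 + a21*a22 + a11*a12) + (t1*t2 + 2*a33*t1*t2 - a33*a33*t1*t2 - 2*a23*t1*t3 - 2*a22*a33*t1*t2 - a22*a22*t1*t2 - 2*a21*t2*t2 - a13*a33*t2*t3 - 2*a12*t1*t1 - a12*a32*t2*t3 - (1/2)*a12*a22*t2*t2 - (1/2)*a12*a22*t1*t1 + 2*a11*t1*t2 - 2*a11*a33*t1*t2 - 2*a11*a22*t1*t2 + (1/2)*a11*a21*t2*t2 + (1/2)*a11*a21*t1*t1 - a11*a11*t1*t2) * (a13*a23 + a12*a22 + a11*a21) + (- 2*a32*t1*t2 - 2*a23*t1*t2 + 2*a13*t2*t2 - (1/2)*a11*a13*t2*t2 - (1/2)*a11*a13*t1*t1) * (a31*a33 + a21*a23 + a11*a13) + (- t1*t3 - a33*a33*t1*t3 - 2*a32*t1*t2 + 2*a22*t1*t3 - 2*a22*a33*t1*t3 - a22*a22*t1*t3 - 2*a21*t2*t3 - 2*a13*t1*t1 + (1/2)*a13*a33*t2*t2 + (1/2)*a13*a33*t1*t1 + a12*a22*t2*t3 - 2*a11*a33*t1*t3 - 2*a11*a22*t1*t3 + a11*a21*t2*t3 - a11*a11*t1*t3) * (a13*a33 + a12*a32 + a11*a31) + ((3/2)*t2*t2 + (1/2)*t1*t1 - 2*a33*t1*t1 + a33*a33*t2*t2 + a33*a33*t1*t1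 - a23*a33*t2*t3 + a22*a33*t2*t2 + a22*a33*t1*t1 + (1/2)*a22*a22*t2*t2 + (1/2)*a22*a22*t1*t1 + 2*a12*t1*t2 + a11*a33*t2*t2 + a11*a33*t1*t1 - 2*a11*a31*t1*t3 + a11*a22*t2*t2 + a11*a22*t1*t1 - (3/2)*a11*a11*t2*t2 - (3/2)*a11*a11*t1*t1) * (- 1 + a32*a32 + a22*a22 + a12*a12) + ((1/2)*t3*t3 - (1/2)*t2*t2 + (1/2)*a33*a33*t3*t3 - (1/2)*a33*a33*t2*t2 + a22*a33*t3*t3 - a22*a33*t2*t2 - a22*a32*t2*t3 + (1/2)*a22*a22*t3*t3 - (1/2)*a22*a22*t2*t2 + 2*a13*t1*t3 - 2*a12*t1*t2 + 2*a11*t2*t2 + a11*a33*t3*t3 - a11*a33*t2*t2 + a11*a22*t3*t3 - a11*a22*t2*t2 + (1/2)*a11*a11*t3*t3 - a11*a11*t2*t2 - (1/2)*a11*a11*t1*t1) * (- 1 + a23*a23 + a22*a22 + a21*a21) + (2*a32*t1*t1 - (1/2)*a32*a33*t2*t2 - (1/2)*a32*a33*t1*t1 + 2*a23*t1*t1 + a23*a32*t2*t3 + (1/2)*a22*a23*t2*t2 + (1/2)*a22*a23*t1*t1) * (a32*a33 + a22*a23 + a12*a13) + (- t2*t3 - a33*a33*t2*t3 - 2*a22*a33*t2*t3 - 2*a13*t1*t2 - 2*a12*t1*t3 + 2*a11*t2*t3 - 2*a11*a33*t2*t3 - 2*a11*a22*t2*t3 - 2*a11*a11*t2*t3) * (a23*a33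 + a22*a32 + a21*a31) + (- t3*t3 + (1/2)*t2*t2 + (1/2)*t1*t1 + (1/2)*a33*a33*t2*t2 + (1/2)*a33*a33*t1*t1 - 2*a22*t1*t1 + a22*a33*t2*t2 + a22*a33*t1*t1 + 2*a21*t1*t2 + 2*a12*t1*t2 - 2*a11*t2*t2 + a11*a33*t2*t2 + a11*a33*t1*t1 + a11*a22*t2*t2 + a11*a22*t1*t1 + a11*a11*t2*t2 + a11*a11*t1*t1) * (- 1 + a33*a33 + a23*a23 + a13*a13) + (- 2*t1*t3 - 2*a33*t1*t3 + 2*a23*t1*t2 - 2*a22*t1*t3 - 2*a21*a32*t2*t2 - 2*a21*a31*t1*t2 + 2*a21*a22*t2*t3 + 2*a21*a21*t1*t3 - 2*a13*t2*t2 + 2*a12*t2*t3 - 2*a11*a31*t2*t2 - 2*a11*a31*t1*t1 - 2*a11*a22*t1*t3 + 2*a11*a21*t2*t3) * (- a22*a31 + a21*a32 - a13) + (- 2*a33*t2*t3 + 2*a21*t1*t3 - 2*a11*t2*t3 - 2*a11*a32*t1*t1 + 2*a11*a31*t1*t2 - 2*a11*a22*t2*t3 - 2*a11*a21*t1*t3 + 2*a11*a12*t1*t3 - 2*a11*a11*t2*t3) * (- a23 + a12*a31 - a11*a32) + (- 2*a33*t3*t3 - 2*a22*t3*t3 - 2*a22*t2*t2 - 2*a21*t1*t2 - 2*a12*t1*t2 - 2*a11*t3*t3 - 2*a11*t1*t1 + 2*a11*a22*t2*t2 + 2*a11*a22*t1*t1 + 2*a11*a11*t2*t2 + 2*a11*a11*t1*t1)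 * (- a33 - a12*a21 + a11*a22)" by algebra
  also have "... = 0" by (simp only: h0 h1 h2 h3 h4 h5 h6 h7 h8 h9 h10 h12 h13 h14 mult_zero_right add_0_right add_0)
  finally show ?thesis .
qed
theorem proposition1:
  fixes R :: "real^3^3" and t :: "real^3"
  assumes "rotation_matrix R"
    and "skew t ** R \<noteq> 0"
  shows "let E = skew t ** R; \<tau> = trace R in
    (1/2) * (\<tau>^2 - 1) * trace (E ** transpose E) + (\<tau> + 1) * trace (E ** E)
      - \<tau> * (trace E)^2 = 0"
proof -
  have o1: "transpose R ** R = mat 1" and o2: "R ** transpose R = mat 1" and d: "det R = 1"
    using assms by (auto simp: rotation_matrix_def orthogonal_matrix_def)
  note ex = vec_eq_iff forall_3 matrix_matrix_mult_def sum_3 mat_def transpose_def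
  have g0: "(- 1 + R$3$1*R$3$1 + R$2$1*R$2$1 + R$1$1*R$1$1) = 0"
    using o1 by (simp add: ex algebra_simps)
  have g1: "(- 1 + R$1$3*R$1$3 + R$1$2*R$1$2 + R$1$1*R$1$1) = 0"
    using o2 by (simp add: ex algebra_simps)
  have g2: "(R$3$1*R$3$2 + R$2$1*R$2$2 + R$1$1*R$1$2) = 0"
    using o1 by (simp add: ex algebra_simps)
  have g3: "(R$1$3*R$2$3 + R$1$2*R$2$2 + R$1$1*R$2$1) = 0"
    using o2 by (simp add: ex algebra_simps)
  have g4: "(R$3$1*R$3$3 + R$2$1*R$2$3 + R$1$1*R$1$3) = 0"
    using o1 by (simp add: ex algebra_simps)
  have g5: "(R$1$3*R$3$3 + R$1$2*R$3$2 + R$1$1*R$3$1) = 0"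
    using o2 by (simp add: ex algebra_simps)
  have g6: "(- 1 + R$3$2*R$3$2 + R$2$2*R$2$2 + R$1$2*R$1$2) = 0"
    using o1 by (simp add: ex algebra_simps)
  have g7: "(- 1 + R$2$3*R$2$3 + R$2$2*R$2$2 + R$2$1*R$2$1) = 0"
    using o2 by (simp add: ex algebra_simps)
  have g8: "(R$3$2*R$3$3 + R$2$2*R$2$3 + R$1$2*R$1$3) = 0"
    using o1 by (simp add: ex algebra_simps)
  have g9: "(R$2$3*R$3$3 + R$2$2*R$3$2 + R$2$1*R$3$1) = 0"
    using o2 by (simp add: ex algebra_simps)
  have g10: "(- 1 + R$3$3*R$3$3 + R$2$3*R$2$3 + R$1$3*R$1$3) = 0"
    using o1 by (simp add: ex algebra_simps)
  have g11: "(- 1 + R$3$3*R$3$3 + R$3$2*R$3$2 + R$3$1*R$3$1) = 0"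
    using o2 by (simp add: ex algebra_simps)
  have g12: "(- R$2$2*R$3$1 + R$2$1*R$3$2 - R$1$3) = 0"
    using cross_rotation_matrix[OF assms(1), of "axis 1 1" "axis 2 1"] by (simp add: cross3_def vec_eq_iff forall_3 matrix_vector_mult_def sum_3 axis_def algebra_simps)
  have g13: "(- R$2$3 + R$1$2*R$3$1 - R$1$1*R$3$2) = 0"
    using cross_rotation_matrix[OF assms(1), of "axis 1 1" "axis 2 1"] by (simp add: cross3_def vec_eq_iff forall_3 matrix_vector_mult_def sum_3 axis_def algebra_simps)
  have g14: "(- R$3$3 - R$1$2*R$2$1 + R$1$1*R$2$2) = 0"
    using cross_rotation_matrix[OF assms(1), of "axis 1 1" "axis 2 1"] by (simp add: cross3_def vec_eq_iff forall_3 matrix_vector_mult_def sum_3 axis_def algebra_simps)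
  have g15: "(- R$2$3*R$3$2 + R$2$2*R$3$3 - R$1$1) = 0"
    using cross_rotation_matrix[OF assms(1), of "axis 2 1" "axis 3 1"] by (simp add: cross3_def vec_eq_iff forall_3 matrix_vector_mult_def sum_3 axis_def algebra_simps)
  have g16: "(- R$2$1 + R$1$3*R$3$2 - R$1$2*R$3$3) = 0"
    using cross_rotation_matrix[OF assms(1), of "axis 2 1" "axis 3 1"] by (simp add: cross3_def vec_eq_iff forall_3 matrix_vector_mult_def sum_3 axis_def algebra_simps)
  have g17: "(- R$3$1 - R$1$3*R$2$2 + R$1$2*R$2$3) = 0"
    using cross_rotation_matrix[OF assms(1), of "axis 2 1" "axis 3 1"] by (simp add: cross3_def vec_eq_iff forall_3 matrix_vector_mult_def sum_3 axis_def algebra_simps)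
  have g18: "(R$2$3*R$3$1 - R$2$1*R$3$3 - R$1$2) = 0"
    using cross_rotation_matrix[OF assms(1), of "axis 3 1" "axis 1 1"] by (simp add: cross3_def vec_eq_iff forall_3 matrix_vector_mult_def sum_3 axis_def algebra_simps)
  have g19: "(- R$2$2 - R$1$3*R$3$1 + R$1$1*R$3$3) = 0"
    using cross_rotation_matrix[OF assms(1), of "axis 3 1" "axis 1 1"] by (simp add: cross3_def vec_eq_iff forall_3 matrix_vector_mult_def sum_3 axis_def algebra_simps)
  have g20: "(- R$3$2 + R$1$3*R$2$1 - R$1$1*R$2$3) = 0"
    using cross_rotation_matrix[OF assms(1), of "axis 3 1" "axis 1 1"] by (simp add: cross3_def vec_eq_iff forall_3 matrix_vector_mult_def sum_3 axis_def algebra_simps)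
  have g21: "(- 1 - R$1$3*R$2$2*R$3$1 + R$1$3*R$2$1*R$3$2 + R$1$2*R$2$3*R$3$1 - R$1$2*R$2$1*R$3$3 - R$1$1*R$2$3*R$3$2 + R$1$1*R$2$2*R$3$3) = 0"
    using d by (simp add: det_3 algebra_simps)
  have tR: "trace R = (R$3$3 + R$2$2 + R$1$1)" by (simp add: trace_def sum_3)
  have tX: "trace (skew t ** R ** transpose (skew t ** R)) = (R$3$3*R$3$3*t$2*t$2 + R$3$3*R$3$3*t$1*t$1 + R$3$2*R$3$2*t$2*t$2 + R$3$2*R$3$2*t$1*t$1 + R$3$1*R$3$1*t$2*t$2 + R$3$1*R$3$1*t$1*t$1 - 2*R$2$3*R$3$3*t$2*t$3 + R$2$3*R$2$3*t$3*t$3 + R$2$3*R$2$3*t$1*t$1 - 2*R$2$2*R$3$2*t$2*t$3 + R$2$2*R$2$2*t$3*t$3 + R$2$2*R$2$2*t$1*t$1 - 2*R$2$1*R$3$1*t$2*t$3 + R$2$1*R$2$1*t$3*t$3 + R$2$1*R$2$1*t$1*t$1 - 2*R$1$3*R$3$3*t$1*t$3 - 2*R$1$3*R$2$3*t$1*t$2 + R$1$3*R$1$3*t$3*t$3 + R$1$3*R$1$3*t$2*t$2 - 2*R$1$2*R$3$2*t$1*t$3 - 2*R$1$2*R$2$2*t$1*t$2 + R$1$2*R$1$2*t$3*t$3 + R$1$2*R$1$2*t$2*t$2 - 2*R$1$1*R$3$1*t$1*t$3 - 2*R$1$1*R$2$1*t$1*t$2 + R$1$1*R$1$1*t$3*t$3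 + R$1$1*R$1$1*t$2*t$2)" by (simp add: trace_def ex skew_def cross3_simps axis_def)
  have tY: "trace (skew t ** R ** (skew t ** R)) = (R$3$2*R$3$2*t$1*t$1 - 2*R$3$1*R$3$2*t$1*t$2 + R$3$1*R$3$1*t$2*t$2 + R$2$3*R$2$3*t$1*t$1 - 2*R$2$2*R$3$3*t$1*t$1 + 2*R$2$2*R$3$1*t$1*t$3 + 2*R$2$1*R$3$3*t$1*t$2 - 2*R$2$1*R$3$1*t$2*t$3 - 2*R$2$1*R$2$3*t$1*t$3 + R$2$1*R$2$1*t$3*t$3 - 2*R$1$3*R$2$3*t$1*t$2 + 2*R$1$3*R$2$2*t$1*t$3 + R$1$3*R$1$3*t$2*t$2 + 2*R$1$2*R$3$3*t$1*t$2 - 2*R$1$2*R$3$2*t$1*t$3 - 2*R$1$2*R$1$3*t$2*t$3 + R$1$2*R$1$2*t$3*t$3 - 2*R$1$1*R$3$3*t$2*t$2 + 2*R$1$1*R$3$2*t$2*t$3 + 2*R$1$1*R$2$3*t$2*t$3 - 2*R$1$1*R$2$2*t$3*t$3)" by (simp add: trace_def ex skew_def cross3_simps axis_def)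
  have tZ: "trace (skew t ** R) = (- R$3$2*t$1 + R$3$1*t$2 + R$2$3*t$1 - R$2$1*t$3 - R$1$3*t$2 + R$1$2*t$3)" by (simp add: trace_def ex skew_def cross3_simps axis_def)
  note K = key[OF g0 g1 g2 g3 g4 g5 g6 g7 g8 g9 g10 g11 g12 g13 g14 g15 g16 g17 g18 g19 g20 g21]
  show ?thesis unfolding Let_def tR tX tY tZ by (rule K)
qed
end
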